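(* Let $(H,\mathcal P)$ be a hypergraph colouring instance with pinnings, $H=(V,\mathcal E)$ with maximum degree $\Delta$, and let $k'\le k$ be integers with $k'\ge 2$ such that $k'\le|e|\le k$ for every $e\in\mathcal E$. Let $t\ge k$ and $q\ge(\mathrm e t\Delta)^{\frac{1}{k'-1}}$. Then for every $v\in V$ and every colour $c\in[q]$, $$\frac1q\Big(1-\frac1t\Big)\le\Pr_{\sigma\sim\mu_{\mathcal C}}[\sigma(v)=c]\le\frac1q\Big(1+\frac4t\Big).$$
   Context: A hypergraph $H=(V,\mathcal E)$ has finite vertex set $V$ and hyperedges $\mathcal E\subseteq 2^V$; its maximum degree $\Delta$ is the maximum number of hyperedges containing a single vertex. For $q\in\mathbb N$, a hypergraph colouring instance with pinnings is a pair $(H,\mathcal P)$ with $\mathcal P=\{P_e\subseteq[q]:e\in\mathcal E\}$. A colouring $\sigma\in[q]^V$ is proper if $|\{\sigma(u):u\in e\}\cup P_e|>1$ for every $e\in\mathcal E$. $\mathcal C$ is the set of proper colourings and $\mu_{\mathcal C}$ the uniform distribution on $\mathcal C$. $\mathrm e$ denotes Euler's number. *)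

theory Defs
  imports "HOL-Analysis.Analysis" "HOL-Library.FuncSet"
begin

definition max_degree :: "'v set \<Rightarrow> 'v set set \<Rightarrow> nat" where
  "max_degree V E = Max ({card {e \<in> E. v \<in> e} | v. v \<in> V} \<union> {0})"

definition colourings :: "'v set \<Rightarrow> nat \<Rightarrow> ('v \<Rightarrow> nat) set" where
  "colourings V q = (V \<rightarrow>\<^sub>E {1..q})"

definition proper_colourings ::
  "'v set \<Rightarrow> 'v set set \<Rightarrow> ('v set \<Rightarrow> nat set) \<Rightarrow> nat \<Rightarrow> ('v \<Rightarrow> nat) set" where
  "proper_colourings V E P q =
     {\<sigma> \<in> colourings V q. \<forall>e\<in>E. card (\<sigma> ` e \<union> P e) > 1}"

definition marginal ::
  "'v set \<Rightarrow> 'v set set \<Rightarrow> ('v set \<Rightarrow> nat set) \<Rightarrow> nat \<Rightarrow> 'v \<Rightarrow> nat \<Rightarrow> real" where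
  "marginal V E P q v c =
     real (card {\<sigma> \<in> proper_colourings V E P q. \<sigma> v = c}) / real (card (proper_colourings V E P q))"

end

theory Submission
  imports Defs
begin


locale cspace =
  fixes V :: "'v set" and q :: nat
  assumes finV: "finite V" and qpos: "1 \<le> q"
begin

abbreviation Om where "Om \<equiv> colourings V q"

definition pr :: "('v \<Rightarrow> nat) set \<Rightarrow> real" where
  "pr S = real (card S) / real (card Om)"

definition dep :: "'v set \<Rightarrow> ('v \<Rightarrow> nat) set \<Rightarrow> bool" where
  "dep U S \<longleftrightarrow> S \<subseteq> Om \<and> (\<forall>s\<in>Om. \<forall>t\<in>Om. (\<forall>u\<in>U. s u = t u) \<longrightarrow> (s\<in>S \<longleftrightarrow> t\<in>S))"

lemma fin_Om: "finite Om"
  unfolding colourings_def by (simp add: finite_PiE finV)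

lemma card_Om: "card Om = q ^ card V"
  unfolding colourings_def by (simp add: card_PiE finV)

lemma card_Om_pos: "real (card Om) > 0"
  using qpos by (simp add: card_Om)

lemma pr_nonneg: "pr S \<ge> 0"
  by (simp add: pr_def)

lemma pr_mono: "S \<subseteq> T \<Longrightarrow> T \<subseteq> Om \<Longrightarrow> pr S \<le> pr T"
proof -
  assume a: "S \<subseteq> T" "T \<subseteq> Om"
  have "finite T" using a(2) fin_Om by (rule finite_subset)
  then have "card S \<le> card T" using a(1) by (rule card_mono)
  then show ?thesis unfolding pr_def using card_Om_pos by (simp add: divide_right_mono)
qed

lemma pr_Om: "pr Om = 1"
  using card_Om_pos by (simp add: pr_def)

lemma pr_diff: "A \<subseteq> Om \<Longrightarrow> pr (A - B) = pr A - pr (A \<inter> B)"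
proof -
  assume a: "A \<subseteq> Om"
  have fA: "finite A" using a fin_Om finite_subset by blast
  have "card (A \<inter> B) + card (A - B) = card A"
    using card_Int_Diff[OF fA, of B] by simp
  then have "real (card (A - B)) = real (card A) - real (card (A \<inter> B))" by linarith
  then show ?thesis unfolding pr_def by (simp add: diff_divide_distrib)
qed

lemma dep_sub: "dep U S \<Longrightarrow> S \<subseteq> Om" by (simp add: dep_def)

lemma Om_out: "s \<in> Om \<Longrightarrow> x \<notin> V \<Longrightarrow> s x = undefined"
  unfolding colourings_def using extensional_arb[of s V x] by (simp add: PiE_def)

lemma dep_mono: "dep U S \<Longrightarrow> U \<subseteq> U' \<Longrightarrow> dep U' S"
  unfolding dep_def by blast

lemma dep_IntV: "dep U S \<Longrightarrow> dep (U \<inter> V) S"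
proof -
  assume d: "dep U S"
  show "dep (U \<inter> V) S" unfolding dep_def
  proof (intro conjI ballI impI)
    show "S \<subseteq> Om" using d by (simp add: dep_def)
    fix s t assume s: "s \<in> Om" and t: "t \<in> Om" and a: "\<forall>u\<in>U \<inter> V. s u = t u"
    have "\<forall>u\<in>U. s u = t u"
    proof
      fix u assume u: "u \<in> U"
      show "s u = t u"
      proof (cases "u \<in> V")
        case True then show ?thesis using a u by blast
      next
        case False then show ?thesis using Om_out[OF s] Om_out[OF t] by simp
      qed
    qed
    then show "s \<in> S \<longleftrightarrow> t \<in> S" using d s t unfolding dep_def by blast
  qed
qed

lemma card_split:
  assumes U0: "U0 \<subseteq> V" and X: "X \<subseteq> (U0 \<rightarrow>\<^sub>E {1..q})" and Y: "Y \<subseteq> ((V - U0) \<rightarrow>\<^sub>E {1..q})"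
  shows "card {s\<in>Om. restrict s U0 \<in> X \<and> restrict s (V - U0) \<in> Y} = card X * card Y"
proof -
  let ?f = "\<lambda>s. (restrict s U0, restrict s (V - U0))"
  let ?S = "{s\<in>Om. restrict s U0 \<in> X \<and> restrict s (V - U0) \<in> Y}"
  have inj: "inj_on ?f ?S"
  proof (rule inj_onI)
    fix s t assume s: "s \<in> ?S" and t: "t \<in> ?S" and e: "?f s = ?f t"
    show "s = t"
    proof (rule ext)
      fix x
      show "s x = t x"
      proof (cases "x \<in> V")
        case True
        have e1: "restrict s U0 = restrict t U0" and e2: "restrict s (V - U0) = restrict t (V - U0)"
          using e by (simp_all only: prod.inject)
        show ?thesis
        proof (cases "x \<in> U0")
          case True
          then show ?thesis using fun_cong[OF e1, of x] by simp
        next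
          case False
          then show ?thesis using fun_cong[OF e2, of x] \<open>x \<in> V\<close> by simp
        qed
      next
        case False
        then show ?thesis using Om_out[of s x] Om_out[of t x] s t by auto
      qed
    qed
  qed
  have im: "?f ` ?S = X \<times> Y"
  proof
    show "?f ` ?S \<subseteq> X \<times> Y" by blast
  next
    show "X \<times> Y \<subseteq> ?f ` ?S"
    proof
      fix p assume p: "p \<in> X \<times> Y"
      obtain a b where ab: "p = (a, b)" "a \<in> X" "b \<in> Y" using p by blast
      have a: "a \<in> U0 \<rightarrow>\<^sub>E {1..q}" using ab X by blast
      have b: "b \<in> (V - U0) \<rightarrow>\<^sub>E {1..q}" using ab Y by blast
      define s where "s = (\<lambda>x. if x \<in> U0 then a x else b x)"
      have a1: "\<forall>i\<in>U0. a i \<in> {1..q}" "a \<in> extensional U0" using a by (simp_all add: PiE_iff)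
      have b1: "\<forall>i\<in>V - U0. b i \<in> {1..q}" "b \<in> extensional (V - U0)" using b by (simp_all add: PiE_iff)
      have sO: "s \<in> Om"
        unfolding colourings_def PiE_iff
      proof
        show "\<forall>i\<in>V. s i \<in> {1..q}" using a1 b1 by (auto simp: s_def)
        show "s \<in> extensional V" unfolding extensional_def s_def
          using U0 extensional_arb[OF b1(2)] by auto
      qed
      have r1: "restrict s U0 = a"
      proof
        fix x show "restrict s U0 x = a x"
          using a1 extensional_arb[of a U0 x] by (cases "x \<in> U0") (simp_all add: s_def)
      qed
      have r2: "restrict s (V - U0) = b"
      proof
        fix x show "restrict s (V - U0) x = b x"
          using extensional_arb[OF b1(2), of x] by (cases "x \<in> U0") (simp_all add: s_def)
      qed
      show "p \<in> ?f ` ?S"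
        using sO r1 r2 ab by (intro image_eqI[of _ _ s]) simp_all
    qed
  qed
  have "card ?S = card (?f ` ?S)" using card_image[OF inj] by (rule sym)
  also have "\<dots> = card X * card Y" unfolding im by (rule card_cartesian_product)
  finally show ?thesis .
qed

lemma restr_Om: "s \<in> Om \<Longrightarrow> W \<subseteq> V \<Longrightarrow> restrict s W \<in> W \<rightarrow>\<^sub>E {1..q}"
  unfolding colourings_def by (auto simp: PiE_iff)

lemma dep_repr:
  assumes "dep U S" "U \<subseteq> V"
  shows "S = {s\<in>Om. restrict s U \<in> (\<lambda>s. restrict s U) ` S \<and> restrict s (V - U) \<in> ((V - U) \<rightarrow>\<^sub>E {1..q})}"
proof
  show "S \<subseteq> {s\<in>Om. restrict s U \<in> (\<lambda>s. restrict s U) ` S \<and> restrict s (V - U) \<in> ((V - U) \<rightarrow>\<^sub>E {1..q})}"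
    using assms(1) restr_Om[of _ "V - U"] unfolding dep_def by blast
next
  show "{s\<in>Om. restrict s U \<in> (\<lambda>s. restrict s U) ` S \<and> restrict s (V - U) \<in> ((V - U) \<rightarrow>\<^sub>E {1..q})} \<subseteq> S"
  proof safe
    fix s t assume s: "s \<in> Om" and t: "t \<in> S" and e: "restrict s U = restrict t U"
    have "\<forall>u\<in>U. s u = t u"
    proof
      fix u assume "u \<in> U" then show "s u = t u" using fun_cong[OF e, of u] by simp
    qed
    moreover have "t \<in> Om" using t assms(1) dep_def by blast
    ultimately show "s \<in> S" using assms(1) s t unfolding dep_def by blast
  qed
qed

lemma indep:
  assumes S: "dep U S" and T: "dep W T" and UW: "U \<inter> W = {}"
  shows "pr (S \<inter> T) = pr S * pr T"
proof -
  define U0 where "U0 = U \<inter> V"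
  have S0: "dep U0 S" using dep_IntV[OF S] U0_def by simp
  have WU: "W \<inter> V \<subseteq> V - U0" using UW unfolding U0_def by blast
  have T0: "dep (V - U0) T" using dep_mono[OF dep_IntV[OF T] WU] .
  have U0V: "U0 \<subseteq> V" by (simp add: U0_def)
  have VV: "V - U0 \<subseteq> V" by auto
  have dd: "V - (V - U0) = U0" using U0V by auto
  define X where "X = (\<lambda>s. restrict s U0) ` S"
  define Y where "Y = (\<lambda>s. restrict s (V - U0)) ` T"
  have R1: "\<And>s. s \<in> Om \<Longrightarrow> restrict s U0 \<in> U0 \<rightarrow>\<^sub>E {1..q}" by (rule restr_Om[OF _ U0V])
  have R2: "\<And>s. s \<in> Om \<Longrightarrow> restrict s (V - U0) \<in> (V - U0) \<rightarrow>\<^sub>E {1..q}" by (rule restr_Om[OF _ VV])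
  have Xs: "X \<subseteq> (U0 \<rightarrow>\<^sub>E {1..q})" using dep_sub[OF S0] R1 unfolding X_def by blast
  have Ys: "Y \<subseteq> ((V - U0) \<rightarrow>\<^sub>E {1..q})" using dep_sub[OF T0] R2 unfolding Y_def by blast
  have Sr: "S = {s\<in>Om. restrict s U0 \<in> X \<and> restrict s (V - U0) \<in> ((V - U0) \<rightarrow>\<^sub>E {1..q})}"
    unfolding X_def by (rule dep_repr[OF S0 U0V])
  have Tr0: "T = {s\<in>Om. restrict s (V - U0) \<in> Y \<and> restrict s (V - (V - U0)) \<in> ((V - (V - U0)) \<rightarrow>\<^sub>E {1..q})}"
    unfolding Y_def by (rule dep_repr[OF T0 VV])
  have Tr: "T = {s\<in>Om. restrict s U0 \<in> (U0 \<rightarrow>\<^sub>E {1..q}) \<and> restrict s (V - U0) \<in> Y}"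
    using Tr0 unfolding dd by (simp add: conj_commute)
  have STr: "S \<inter> T = {s\<in>Om. restrict s U0 \<in> X \<and> restrict s (V - U0) \<in> Y}"
  proof -
    have "S \<inter> T = {s\<in>Om. restrict s U0 \<in> X \<and> restrict s (V - U0) \<in> ((V - U0) \<rightarrow>\<^sub>E {1..q})} \<inter> {s\<in>Om. restrict s U0 \<in> (U0 \<rightarrow>\<^sub>E {1..q}) \<and> restrict s (V - U0) \<in> Y}"
      using Sr Tr by simp
    also have "\<dots> = {s\<in>Om. restrict s U0 \<in> X \<and> restrict s (V - U0) \<in> Y}"
    proof (rule set_eqI)
      fix s show "s \<in> {s\<in>Om. restrict s U0 \<in> X \<and> restrict s (V - U0) \<in> ((V - U0) \<rightarrow>\<^sub>E {1..q})} \<inter> {s\<in>Om. restrict s U0 \<in> (U0 \<rightarrow>\<^sub>E {1..q}) \<and> restrict s (V - U0) \<in> Y} \<longleftrightarrow> s \<in> {s\<in>Om. restrict s U0 \<in> X \<and> restrict s (V - U0) \<in> Y}"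
        using Xs Ys R1[of s] R2[of s] by blast
    qed
    finally show ?thesis .
  qed
  have Omr: "Om = {s\<in>Om. restrict s U0 \<in> (U0 \<rightarrow>\<^sub>E {1..q}) \<and> restrict s (V - U0) \<in> ((V - U0) \<rightarrow>\<^sub>E {1..q})}"
  proof (rule set_eqI)
    fix s show "s \<in> Om \<longleftrightarrow> s \<in> {s\<in>Om. restrict s U0 \<in> (U0 \<rightarrow>\<^sub>E {1..q}) \<and> restrict s (V - U0) \<in> ((V - U0) \<rightarrow>\<^sub>E {1..q})}"
      using R1[of s] R2[of s] by blast
  qed
  have c1: "card S = card X * card ((V - U0) \<rightarrow>\<^sub>E {1..q})"
    using card_split[OF U0V Xs subset_refl] by (simp only: Sr[symmetric])
  have c2: "card T = card (U0 \<rightarrow>\<^sub>E {1..q}) * card Y"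
    using card_split[OF U0V subset_refl Ys] by (simp only: Tr[symmetric])
  have c3: "card (S \<inter> T) = card X * card Y"
    using card_split[OF U0V Xs Ys] by (simp only: STr[symmetric])
  have c4: "card Om = card (U0 \<rightarrow>\<^sub>E {1..q}) * card ((V - U0) \<rightarrow>\<^sub>E {1..q})"
    using card_split[OF U0V subset_refl subset_refl] by (simp only: Omr[symmetric])
  have "real (card (S \<inter> T)) * real (card Om) = real (card S) * real (card T)"
    using c1 c2 c3 c4 by (simp add: algebra_simps)
  then show ?thesis using card_Om_pos unfolding pr_def
    by (simp add: field_simps)
qed

end


context cspace
begin

definition Bad :: "('v set \<Rightarrow> nat set) \<Rightarrow> 'v set \<Rightarrow> ('v \<Rightarrow> nat) set" where
  "Bad P e = {s\<in>Om. \<not> 1 < card (s ` e \<union> P e)}"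

definition CC :: "('v set \<Rightarrow> nat set) \<Rightarrow> 'v set set \<Rightarrow> ('v \<Rightarrow> nat) set" where
  "CC P F = {s\<in>Om. \<forall>e\<in>F. s \<notin> Bad P e}"

lemma Bad_sub: "Bad P e \<subseteq> Om" by (auto simp: Bad_def)
lemma CC_sub: "CC P F \<subseteq> Om" by (auto simp: CC_def)
lemma CC_empty: "CC P {} = Om" by (auto simp: CC_def)
lemma CC_insert: "CC P (insert e G) = CC P G - Bad P e" by (auto simp: CC_def Bad_def)
lemma CC_anti: "G \<subseteq> F \<Longrightarrow> CC P F \<subseteq> CC P G" by (auto simp: CC_def)

lemma dep_Bad: "dep e (Bad P e)"
  unfolding dep_def
proof (intro conjI ballI impI)
  show "Bad P e \<subseteq> Om" by (rule Bad_sub)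
  fix s t assume s: "s \<in> Om" and t: "t \<in> Om" and a: "\<forall>u\<in>e. s u = t u"
  have "s ` e = t ` e" using a by (intro image_cong) auto
  then show "s \<in> Bad P e \<longleftrightarrow> t \<in> Bad P e" using s t by (simp add: Bad_def)
qed

lemma dep_CC: "dep (\<Union>F) (CC P F)"
  unfolding dep_def
proof (intro conjI ballI impI)
  show "CC P F \<subseteq> Om" by (rule CC_sub)
  fix s t assume s: "s \<in> Om" and t: "t \<in> Om" and a: "\<forall>u\<in>\<Union>F. s u = t u"
  have "\<forall>e\<in>F. (s \<in> Bad P e \<longleftrightarrow> t \<in> Bad P e)"
  proof
    fix e assume e: "e \<in> F"
    have "\<forall>u\<in>e. s u = t u" using a e by blast
    then show "s \<in> Bad P e \<longleftrightarrow> t \<in> Bad P e" using dep_Bad[of e P] s t unfolding dep_def by blast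
  qed
  then show "s \<in> CC P F \<longleftrightarrow> t \<in> CC P F" using s t unfolding CC_def by blast
qed

end

locale lll = cspace V q for V :: "'v set" and q +
  fixes E :: "'v set set" and P :: "'v set \<Rightarrow> nat set" and x :: real
  assumes EV: "\<forall>e\<in>E. e \<subseteq> V" and x0: "0 \<le> x" and x1: "x < 1"
    and cond: "\<forall>e\<in>E. pr (Bad P e) \<le> x * (1 - x) ^ card {f\<in>E. f \<noteq> e \<and> f \<inter> e \<noteq> {}}"
begin

lemma finE: "finite E"
proof -
  have "E \<subseteq> Pow V" using EV by blast
  moreover have "finite (Pow V)" using finV by simp
  ultimately show ?thesis by (rule finite_subset)
qed

lemma step:
  assumes G: "G \<subseteq> E" and e: "e \<in> E" "e \<notin> G"
    and bnd: "pr (Bad P e \<inter> CC P G) * (1 - x) ^ card {f\<in>G. f \<inter> e \<noteq> {}} \<le> pr (Bad P e) * pr (CC P G)"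
  shows "(1 - x) * pr (CC P G) \<le> pr (CC P (insert e G))"
proof -
  define m where "m = card {f\<in>G. f \<inter> e \<noteq> {}}"
  define n where "n = card {f\<in>E. f \<noteq> e \<and> f \<inter> e \<noteq> {}}"
  have sub: "{f\<in>G. f \<inter> e \<noteq> {}} \<subseteq> {f\<in>E. f \<noteq> e \<and> f \<inter> e \<noteq> {}}" using e G by blast
  have fin: "finite {f\<in>E. f \<noteq> e \<and> f \<inter> e \<noteq> {}}" using finE by simp
  have c: "m \<le> n" unfolding m_def n_def by (rule card_mono[OF fin sub])
  have p: "(1 - x) ^ n \<le> (1 - x) ^ m" by (rule power_decreasing[OF c]) (use x0 x1 in auto)
  have pos: "(1 - x) ^ m > 0" using x1 by simp
  have b1: "pr (Bad P e \<inter> CC P G) * (1 - x) ^ m \<le> pr (Bad P e) * pr (CC P G)"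
    using bnd unfolding m_def .
  have b2: "pr (Bad P e) \<le> x * (1 - x) ^ m"
  proof -
    have "pr (Bad P e) \<le> x * (1 - x) ^ n" using cond e unfolding n_def by blast
    also have "\<dots> \<le> x * (1 - x) ^ m" using p x0 by (simp add: mult_left_mono)
    finally show ?thesis .
  qed
  have "pr (Bad P e \<inter> CC P G) * (1 - x) ^ m \<le> (x * pr (CC P G)) * (1 - x) ^ m"
    using b1 mult_right_mono[OF b2 pr_nonneg[of "CC P G"]] by (simp add: algebra_simps)
  then have b3: "pr (Bad P e \<inter> CC P G) \<le> x * pr (CC P G)" using pos by simp
  have "pr (CC P (insert e G)) = pr (CC P G) - pr (CC P G \<inter> Bad P e)"
    unfolding CC_insert by (rule pr_diff[OF CC_sub])
  also have "CC P G \<inter> Bad P e = Bad P e \<inter> CC P G" by blast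
  finally show ?thesis using b3 by (simp add: algebra_simps)
qed

lemma main:
  "F \<subseteq> E \<Longrightarrow> (\<forall>U A. dep U A \<longrightarrow> pr (A \<inter> CC P F) * (1 - x) ^ card {e\<in>F. e \<inter> U \<noteq> {}} \<le> pr A * pr (CC P F))
     \<and> 0 < pr (CC P F)"
proof (induction "card F" arbitrary: F rule: less_induct)
  case less
  have FE: "F \<subseteq> E" by fact
  have IH: "\<And>G. G \<subseteq> E \<Longrightarrow> card G < card F \<Longrightarrow>
     (\<forall>U A. dep U A \<longrightarrow> pr (A \<inter> CC P G) * (1 - x) ^ card {e\<in>G. e \<inter> U \<noteq> {}} \<le> pr A * pr (CC P G))
     \<and> 0 < pr (CC P G)" using less by blast
  have finF: "finite F" using FE finE by (rule finite_subset)
  have stepF: "(1 - x) * pr (CC P G) \<le> pr (CC P (insert e G)) \<and> 0 < pr (CC P G)"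
    if GF: "G \<subseteq> F" and eF: "e \<in> F" and eG: "e \<notin> G" for G e
  proof -
    have "G \<subset> F" using GF eF eG by blast
    then have cG: "card G < card F" using finF by (rule psubset_card_mono[rotated])
    have GE: "G \<subseteq> E" using GF FE by blast
    note ih = IH[OF GE cG]
    have bnd: "pr (Bad P e \<inter> CC P G) * (1 - x) ^ card {f\<in>G. f \<inter> e \<noteq> {}} \<le> pr (Bad P e) * pr (CC P G)"
      using ih dep_Bad[of e P] by blast
    have "(1 - x) * pr (CC P G) \<le> pr (CC P (insert e G))"
      using step[OF GE _ eG bnd] eF FE by blast
    then show ?thesis using ih by blast
  qed
  have part1: "\<forall>U A. dep U A \<longrightarrow> pr (A \<inter> CC P F) * (1 - x) ^ card {e\<in>F. e \<inter> U \<noteq> {}} \<le> pr A * pr (CC P F)"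
  proof (intro allI impI)
    fix U A assume dA: "dep U A"
    define F1 where "F1 = {e\<in>F. e \<inter> U \<noteq> {}}"
    define F2 where "F2 = F - F1"
    have chain: "(1 - x) ^ card H * pr (CC P F2) \<le> pr (CC P (F2 \<union> H))"
      if "finite H" "H \<subseteq> F1" for H
      using that
    proof (induction H rule: finite_induct)
      case empty
      then show ?case by simp
    next
      case (insert e H)
      have eF: "e \<in> F" and eF2: "e \<notin> F2" using insert.prems unfolding F1_def F2_def by auto
      have GF: "F2 \<union> H \<subseteq> F" using insert.prems unfolding F1_def F2_def by auto
      have eG: "e \<notin> F2 \<union> H" using eF2 insert.hyps by blast
      have ih: "(1 - x) ^ card H * pr (CC P F2) \<le> pr (CC P (F2 \<union> H))"
        using insert.IH insert.prems by blast
      have s: "(1 - x) * pr (CC P (F2 \<union> H)) \<le> pr (CC P (insert e (F2 \<union> H)))"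
        using stepF[OF GF eF eG] by blast
      have "(1 - x) ^ card (insert e H) * pr (CC P F2) = (1 - x) * ((1 - x) ^ card H * pr (CC P F2))"
        using insert.hyps by simp
      also have "\<dots> \<le> (1 - x) * pr (CC P (F2 \<union> H))"
        using ih x1 by (simp add: mult_left_mono)
      also have "\<dots> \<le> pr (CC P (F2 \<union> insert e H))" using s by simp
      finally show ?case .
    qed
    have F1F: "F1 \<subseteq> F" unfolding F1_def by blast
    have fin1: "finite F1" using F1F finF by (rule finite_subset)
    have chainF: "(1 - x) ^ card F1 * pr (CC P F2) \<le> pr (CC P F)"
      using chain[OF fin1 subset_refl] F1F unfolding F2_def by (simp add: Un_absorb2)
    have disj: "U \<inter> \<Union>F2 = {}" unfolding F2_def F1_def by blast
    have ind: "pr (A \<inter> CC P F2) = pr A * pr (CC P F2)"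
      by (rule indep[OF dA dep_CC disj])
    have mono: "pr (A \<inter> CC P F) \<le> pr (A \<inter> CC P F2)"
      using CC_anti[of F2 F] CC_sub[of P F2] unfolding F2_def by (intro pr_mono) auto
    have pw: "(1 - x) ^ card F1 \<ge> 0" using x1 by simp
    have "pr (A \<inter> CC P F) * (1 - x) ^ card F1 \<le> pr A * pr (CC P F2) * (1 - x) ^ card F1"
      using mult_right_mono[OF mono pw] ind by simp
    also have "\<dots> = pr A * ((1 - x) ^ card F1 * pr (CC P F2))" by simp
    also have "\<dots> \<le> pr A * pr (CC P F)" using chainF pr_nonneg[of A] by (rule mult_left_mono)
    finally show "pr (A \<inter> CC P F) * (1 - x) ^ card {e\<in>F. e \<inter> U \<noteq> {}} \<le> pr A * pr (CC P F)"
      unfolding F1_def .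
  qed
  have part2: "0 < pr (CC P F)"
  proof (cases "F = {}")
    case True
    then show ?thesis using pr_Om CC_empty by simp
  next
    case False
    then obtain e where eF: "e \<in> F" by blast
    have "F - {e} \<subseteq> F" by blast
    from stepF[OF this eF] have "(1 - x) * pr (CC P (F - {e})) \<le> pr (CC P (insert e (F - {e})))"
      "0 < pr (CC P (F - {e}))" by auto
    moreover have "insert e (F - {e}) = F" using eF by blast
    moreover have "0 < (1 - x) * pr (CC P (F - {e}))" using x1 calculation(2) by simp
    ultimately show ?thesis by simp
  qed
  show ?case using part1 part2 by blast
qed

end


lemma pow_lb:
  fixes y :: real
  assumes y0: "0 < y" and y1: "y < 1" and n: "real n \<le> (1 - y) / y"
  shows "exp (-1) \<le> (1 - y) ^ n"
proof -
  have p: "0 < 1 - y" using y1 by simp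
  have l1: "ln (1 / (1 - y)) \<le> 1 / (1 - y) - 1" using p by (intro ln_le_minus_one) simp
  have l2: "ln (1 / (1 - y)) = - ln (1 - y)" using p by (simp add: ln_div)
  have l3: "1 / (1 - y) - 1 = y / (1 - y)" using p by (simp add: field_simps)
  have lnb: "- ln (1 - y) \<le> y / (1 - y)" using l1 l2 l3 by simp
  have "real n * y \<le> 1 - y" using n y0 by (simp add: pos_le_divide_eq)
  then have ny: "real n * (y / (1 - y)) \<le> 1" using p by (simp add: field_simps)
  have "real n * (- ln (1 - y)) \<le> real n * (y / (1 - y))" by (rule mult_left_mono[OF lnb]) simp
  then have "- 1 \<le> real n * ln (1 - y)" using ny by simp
  then have "exp (-1) \<le> exp (real n * ln (1 - y))" by simp
  also have "\<dots> = (1 - y) ^ n" using p by (simp add: exp_of_nat_mult)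
  finally show ?thesis .
qed

context cspace
begin

lemma dep_Int: "dep U S \<Longrightarrow> dep U T \<Longrightarrow> dep U (S \<inter> T)"
  unfolding dep_def by blast

lemma pr_Un: "pr (S \<union> T) \<le> pr S + pr T"
proof -
  have "card (S \<union> T) \<le> card S + card T" by (rule card_Un_le)
  then have "real (card (S \<union> T)) \<le> real (card S) + real (card T)" by linarith
  then have "real (card (S \<union> T)) / real (card Om) \<le> (real (card S) + real (card T)) / real (card Om)"
    using card_Om_pos by (simp add: divide_right_mono)
  then show ?thesis unfolding pr_def by (simp add: add_divide_distrib)
qed

lemma pr_UN: "finite I \<Longrightarrow> pr (\<Union>i\<in>I. f i) \<le> (\<Sum>i\<in>I. pr (f i))"
proof -
  assume fI: "finite I"
  have "card (\<Union>i\<in>I. f i) \<le> (\<Sum>i\<in>I. card (f i))" by (rule card_UN_le[OF fI])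
  then have "real (card (\<Union>i\<in>I. f i)) \<le> (\<Sum>i\<in>I. real (card (f i)))"
    by (metis of_nat_le_iff of_nat_sum)
  then show ?thesis unfolding pr_def using card_Om_pos by (simp add: sum_divide_distrib[symmetric] divide_right_mono)
qed

lemma cnt:
  assumes e: "e \<subseteq> V" and a: "a \<in> {1..q}"
  shows "pr {s\<in>Om. \<forall>u\<in>e. s u = a} = 1 / real q ^ card e"
proof -
  have eq: "{s\<in>Om. \<forall>u\<in>e. s u = a} = (\<Pi>\<^sub>E u\<in>V. if u \<in> e then {a} else {1..q})"
  proof (rule set_eqI, rule iffI)
    fix s assume "s \<in> {s\<in>Om. \<forall>u\<in>e. s u = a}"
    then show "s \<in> (\<Pi>\<^sub>E u\<in>V. if u \<in> e then {a} else {1..q})"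
      unfolding colourings_def by (auto simp: PiE_iff)
  next
    fix s assume s: "s \<in> (\<Pi>\<^sub>E u\<in>V. if u \<in> e then {a} else {1..q})"
    have s1: "\<forall>i\<in>V. s i \<in> (if i \<in> e then {a} else {1..q})" "s \<in> extensional V"
      using s by (simp_all add: PiE_iff)
    have "\<forall>i\<in>V. s i \<in> {1..q}"
    proof
      fix i assume i: "i \<in> V"
      then have "s i \<in> (if i \<in> e then {a} else {1..q})" using s1(1) by blast
      then show "s i \<in> {1..q}" using a by (cases "i \<in> e") auto
    qed
    moreover have "\<forall>u\<in>e. s u = a"
    proof
      fix u assume u: "u \<in> e"
      then have "s u \<in> (if u \<in> e then {a} else {1..q})" using s1(1) e by blast
      then show "s u = a" using u by simp
    qed
    ultimately show "s \<in> {s\<in>Om. \<forall>u\<in>e. s u = a}" using s1(2) unfolding colourings_def by (simp add: PiE_iff)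
  qed
  have fe: "finite e" using e finV by (rule finite_subset)
  have "card {s\<in>Om. \<forall>u\<in>e. s u = a} = (\<Prod>u\<in>V. card (if u \<in> e then {a} else {1..q}))"
    unfolding eq by (rule card_PiE[OF finV])
  also have "\<dots> = (\<Prod>u\<in>V. if u \<in> e then 1 else q)"
    by (rule prod.cong) auto
  also have "\<dots> = q ^ card (V - e)"
    using finV by (simp add: prod.If_cases Diff_eq)
  also have "card (V - e) = card V - card e" using e fe by (simp add: card_Diff_subset)
  finally have c: "card {s\<in>Om. \<forall>u\<in>e. s u = a} = q ^ (card V - card e)" .
  have le: "card e \<le> card V" using e finV by (rule card_mono[rotated])
  have "real q ^ (card V - card e) * real q ^ card e = real q ^ card V"
    using le by (simp add: power_add[symmetric])
  moreover have "real q > 0" using qpos by simp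
  ultimately show ?thesis unfolding pr_def c card_Om
    by (simp add: field_simps)
qed

lemma Bad_cover:
  assumes e: "e \<subseteq> V" "e \<noteq> {}" and Pe: "P e \<subseteq> {1..q}"
  shows "Bad P e \<subseteq> (\<Union>a\<in>{1..q}. {s\<in>Om. \<forall>u\<in>e. s u = a})"
proof
  fix s assume s: "s \<in> Bad P e"
  then have sO: "s \<in> Om" and c: "card (s ` e \<union> P e) \<le> 1" by (auto simp: Bad_def)
  have fe: "finite e" using e(1) finV by (rule finite_subset)
  have fin: "finite (s ` e \<union> P e)" using fe Pe finite_subset by auto
  have all: "\<forall>a1\<in>s ` e \<union> P e. \<forall>a2\<in>s ` e \<union> P e. a1 = a2"
    using c fin card_le_Suc0_iff_eq by auto
  obtain u0 where u0: "u0 \<in> e" using e(2) by blast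
  have "s u0 \<in> {1..q}" using sO u0 e(1) unfolding colourings_def by (auto simp: PiE_iff)
  moreover have "\<forall>u\<in>e. s u = s u0" using all u0 by blast
  ultimately show "s \<in> (\<Union>a\<in>{1..q}. {s\<in>Om. \<forall>u\<in>e. s u = a})" using sO by blast
qed

lemma pr_Bad:
  assumes e: "e \<subseteq> V" "e \<noteq> {}" and Pe: "P e \<subseteq> {1..q}"
  shows "pr (Bad P e) \<le> real q / real q ^ card e"
proof -
  have "pr (Bad P e) \<le> pr (\<Union>a\<in>{1..q}. {s\<in>Om. \<forall>u\<in>e. s u = a})"
    by (rule pr_mono[OF Bad_cover[of e P, OF e Pe]]) blast
  also have "\<dots> \<le> (\<Sum>a\<in>{1..q}. pr {s\<in>Om. \<forall>u\<in>e. s u = a})" by (rule pr_UN) simp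
  also have "\<dots> = (\<Sum>a\<in>{1..q}. 1 / real q ^ card e)" using cnt[OF e(1)] by simp
  also have "\<dots> = real q / real q ^ card e" by simp
  finally show ?thesis .
qed

lemma ABad:
  assumes v: "v \<in> e" and e: "e \<subseteq> V" and Pe: "P e \<subseteq> {1..q}"
  shows "{s\<in>Om. s v = c} \<inter> Bad P e \<subseteq> {s\<in>Om. \<forall>u\<in>e. s u = c}"
proof
  fix s assume s: "s \<in> {s\<in>Om. s v = c} \<inter> Bad P e"
  then have sO: "s \<in> Om" and sv: "s v = c" and c: "card (s ` e \<union> P e) \<le> 1" by (auto simp: Bad_def)
  have fe: "finite e" using e finV by (rule finite_subset)
  have fin: "finite (s ` e \<union> P e)" using fe Pe finite_subset by auto
  have all: "\<forall>a1\<in>s ` e \<union> P e. \<forall>a2\<in>s ` e \<union> P e. a1 = a2"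
    using c fin card_le_Suc0_iff_eq by auto
  have "\<forall>u\<in>e. s u = s v" using all v by blast
  then show "s \<in> {s\<in>Om. \<forall>u\<in>e. s u = c}" using sO sv by simp
qed

lemma dep_pt: "dep {v} {s\<in>Om. s v = c}"
  unfolding dep_def by auto

end


theorem lemma2p5:
  fixes V :: "'v set" and E :: "'v set set" and P :: "'v set \<Rightarrow> nat set"
    and q k k' :: nat and t :: real
  assumes "finite V"
    and "\<forall>e\<in>E. e \<subseteq> V"
    and "\<forall>e\<in>E. P e \<subseteq> {1..q}"
    and "2 \<le> k'" and "k' \<le> k"
    and "\<forall>e\<in>E. k' \<le> card e \<and> card e \<le> k"
    and "real k \<le> t"
    and "real q \<ge> (exp 1 * t * real (max_degree V E)) powr (1 / (real k' - 1))"
    and "v \<in> V" and "c \<in> {1..q}"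
  shows "1 / real q * (1 - 1 / t) \<le> marginal V E P q v c
       \<and> marginal V E P q v c \<le> 1 / real q * (1 + 4 / t)"
proof -
  note finV = assms(1) and EV = assms(2) and PE = assms(3) and k'2 = assms(4) and kk = assms(5)
    and card_e = assms(6) and kt = assms(7) and qbig = assms(8) and vV = assms(9) and cq = assms(10)
  have q1: "1 \<le> q" using cq by simp
  interpret cspace V q using finV q1 by unfold_locales
  define A where "A = {s\<in>Om. s v = c}"
  define D where "D = max_degree V E"
  have t2: "2 \<le> t" using k'2 kk kt by linarith
  have qpos: "0 < real q" using q1 by simp
  have PC: "proper_colourings V E P q = CC P E"
    unfolding proper_colourings_def CC_def Bad_def by auto
  have AC: "{s \<in> CC P E. s v = c} = A \<inter> CC P E" unfolding A_def using CC_sub by blast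
  have marg: "marginal V E P q v c = pr (A \<inter> CC P E) / pr (CC P E)"
    unfolding marginal_def pr_def PC AC using card_Om_pos by simp
  have Aeq: "A = {s\<in>Om. \<forall>u\<in>{v}. s u = c}" unfolding A_def by simp
  have prA: "pr A = 1 / real q" unfolding Aeq using cnt[of "{v}" c] vV cq by simp
  have finE: "finite E"
  proof -
    have "E \<subseteq> Pow V" using EV by blast
    moreover have "finite (Pow V)" using finV by simp
    ultimately show ?thesis by (rule finite_subset)
  qed
  show ?thesis
  proof (cases "E = {}")
    case True
    have AO: "A \<inter> Om = A" by (auto simp: A_def)
    have "marginal V E P q v c = pr (A \<inter> Om) / pr Om" using marg True CC_empty by simp
    also have "\<dots> = 1 / real q" unfolding AO pr_Om prA by simp
    finally have "marginal V E P q v c = 1 / real q" .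
    moreover have "1 / real q * (1 - 1 / t) \<le> 1 / real q" using t2 qpos by (simp add: field_simps)
    moreover have "1 / real q \<le> 1 / real q * (1 + 4 / t)" using t2 qpos by (simp add: field_simps)
    ultimately show ?thesis by simp
  next
    case False

    have Dfin: "finite ({card {e \<in> E. u \<in> e} | u. u \<in> V} \<union> {0})" using finV by simp
    have degle: "card {f\<in>E. u \<in> f} \<le> D" if "u \<in> V" for u
      unfolding D_def max_degree_def by (rule Max_ge[OF Dfin]) (use that in blast)
    obtain e0 where e0: "e0 \<in> E" using False by blast
    have "card e0 \<ge> 2" using card_e e0 k'2 by force
    then have "e0 \<noteq> {}" by auto
    then obtain u0 where u0: "u0 \<in> e0" by blast
    have u0V: "u0 \<in> V" using u0 e0 EV by blast
    have "0 < card {f\<in>E. u0 \<in> f}" using finE e0 u0 by (auto simp: card_gt_0_iff)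
    then have D1: "1 \<le> D" using degle[OF u0V] by linarith
    have Dr: "1 \<le> real D" using D1 by simp
    have "2 * 1 \<le> t * real D" by (rule mult_mono) (use t2 Dr in auto)
    then have tD: "2 \<le> t * real D" by simp
    define x where "x = 1 / (t * real D)"
    have x0: "0 < x" using tD by (simp add: x_def)
    have x1: "x < 1" using tD by (simp add: x_def)
    have xD: "real D * x = 1 / t" using Dr t2 by (simp add: x_def)
    have ox: "(1 - x) / x = 1 / x - 1" using x0 by (simp add: diff_divide_distrib)
    have ix: "1 / x = t * real D" by (simp add: x_def)
    have oneminus: "(1 - x) / x = t * real D - 1" using ox ix by simp
    have powlb: "exp (-1) \<le> (1 - x) ^ n" if "real n \<le> t * real D - 1" for n
      using pow_lb[OF x0 x1] that oneminus by simp
    have epos: "0 < exp 1 * t * real D" using t2 Dr by simp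
    have qk: "exp 1 * t * real D \<le> real q ^ (k' - 1)"
    proof -
      define z where "z = (exp 1 * t * real D) powr (1 / (real k' - 1))"
      have z0: "0 < z" unfolding z_def using epos t2 D1 by simp
      have zq: "z \<le> real q" using qbig unfolding z_def D_def by simp
      have "z ^ (k' - 1) = z powr real (k' - 1)" using z0 by (simp add: powr_realpow)
      also have "real (k' - 1) = real k' - 1" using k'2 by (simp add: of_nat_diff)
      also have "z powr (real k' - 1) = (exp 1 * t * real D) powr (1 / (real k' - 1) * (real k' - 1))"
        unfolding z_def by (rule powr_powr)
      also have "1 / (real k' - 1) * (real k' - 1) = 1" using k'2 by simp
      also have "(exp 1 * t * real D) powr 1 = exp 1 * t * real D" using epos by simp
      finally have "z ^ (k' - 1) = exp 1 * t * real D" .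
      moreover have "z ^ (k' - 1) \<le> real q ^ (k' - 1)" using zq z0 by (simp add: power_mono)
      ultimately show ?thesis by simp
    qed
    have qe: "exp 1 * t * real D \<le> real q ^ (card e - 1)" if "e \<in> E" for e
    proof -
      have "k' - 1 \<le> card e - 1" using card_e that by auto
      then have "real q ^ (k' - 1) \<le> real q ^ (card e - 1)" using q1 by (simp add: power_increasing)
      then show ?thesis using qk by simp
    qed
    have qe2: "real q ^ card e = real q * real q ^ (card e - 1)" if "e \<in> E" for e
    proof -
      have "card e = Suc (card e - 1)" using card_e that k'2 by auto
      then show ?thesis by (metis power_Suc)
    qed
    have nbb: "real (card {f\<in>E. f \<noteq> e \<and> f \<inter> e \<noteq> {}}) \<le> t * real D - 1" if eE: "e \<in> E" for e
    proof -
      have eV: "e \<subseteq> V" using EV eE by blast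
      have fe: "finite e" using eV finV by (rule finite_subset)
      have sub: "{f\<in>E. f \<noteq> e \<and> f \<inter> e \<noteq> {}} \<subseteq> (\<Union>u\<in>e. {f\<in>E. u \<in> f} - {e})" by blast
      have "card {f\<in>E. f \<noteq> e \<and> f \<inter> e \<noteq> {}} \<le> card (\<Union>u\<in>e. {f\<in>E. u \<in> f} - {e})"
        using finE fe by (intro card_mono[OF _ sub]) auto
      also have "\<dots> \<le> (\<Sum>u\<in>e. card ({f\<in>E. u \<in> f} - {e}))" by (rule card_UN_le[OF fe])
      also have "\<dots> \<le> (\<Sum>u\<in>e. D - 1)"
      proof (rule sum_mono)
        fix u assume u: "u \<in> e"
        have "card ({f\<in>E. u \<in> f} - {e}) = card {f\<in>E. u \<in> f} - 1"
          using u eE finE by (simp add: card_Diff_singleton)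
        also have "\<dots> \<le> D - 1" using degle[of u] u eV by (simp add: diff_le_mono subset_iff)
        finally show "card ({f\<in>E. u \<in> f} - {e}) \<le> D - 1" .
      qed
      also have "\<dots> = card e * (D - 1)" by simp
      also have "\<dots> \<le> k * (D - 1)" using card_e eE by (simp add: mult_right_mono)
      finally have c: "card {f\<in>E. f \<noteq> e \<and> f \<inter> e \<noteq> {}} \<le> k * (D - 1)" .
      have "real (k * (D - 1)) = real k * real D - real k" using D1 by (simp add: of_nat_diff algebra_simps)
      also have "\<dots> \<le> t * real D - 1"
      proof -
        have "real k * real D \<le> t * real D" using kt Dr by (simp add: mult_right_mono)
        moreover have "1 \<le> real k" using k'2 kk by simp
        ultimately show ?thesis by linarith
      qed
      finally have c2: "real (k * (D - 1)) \<le> t * real D - 1" .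
      have "real (card {f\<in>E. f \<noteq> e \<and> f \<inter> e \<noteq> {}}) \<le> real (k * (D - 1))"
        using c by (simp only: of_nat_le_iff)
      then show ?thesis using c2 by linarith
    qed
    have cond: "\<forall>e\<in>E. pr (Bad P e) \<le> x * (1 - x) ^ card {f\<in>E. f \<noteq> e \<and> f \<inter> e \<noteq> {}}"
    proof
      fix e assume eE: "e \<in> E"
      have eV: "e \<subseteq> V" using EV eE by blast
      have ene: "e \<noteq> {}" using card_e eE k'2 by force
      have "pr (Bad P e) \<le> real q / real q ^ card e"
        using pr_Bad[of e P] eV ene PE eE by blast
      also have "\<dots> = 1 / real q ^ (card e - 1)" using qe2[OF eE] qpos by simp
      also have "\<dots> \<le> 1 / (exp 1 * t * real D)"
        using qe[OF eE] epos by (simp add: frac_le)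
      also have "\<dots> = x * exp (-1)" by (simp add: x_def exp_minus field_simps)
      also have "\<dots> \<le> x * (1 - x) ^ card {f\<in>E. f \<noteq> e \<and> f \<inter> e \<noteq> {}}"
        using powlb[OF nbb[OF eE]] x0 by (simp add: mult_left_mono)
      finally show "pr (Bad P e) \<le> x * (1 - x) ^ card {f\<in>E. f \<noteq> e \<and> f \<inter> e \<noteq> {}}" .
    qed
    interpret lll V q E P x
      using EV x0 x1 cond by unfold_locales auto
    have CCpos: "0 < pr (CC P E)" using main[OF subset_refl] by blast
    have depA: "dep {v} A" unfolding A_def by (rule dep_pt)
    define F1 where "F1 = {f\<in>E. v \<in> f}"
    have F1D: "card F1 \<le> D" unfolding F1_def by (rule degle[OF vV])
    have finF1: "finite F1" unfolding F1_def using finE by simp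
    have upper: "marginal V E P q v c \<le> 1 / real q * (1 + 4 / t)"
    proof -
      have F1': "{e\<in>E. e \<inter> {v} \<noteq> {}} = F1" unfolding F1_def by blast
      have m0: "pr (A \<inter> CC P E) * (1 - x) ^ card {e\<in>E. e \<inter> {v} \<noteq> {}} \<le> pr A * pr (CC P E)"
        using main[OF subset_refl] depA by blast
      have m1: "pr (A \<inter> CC P E) * (1 - x) ^ card F1 \<le> pr A * pr (CC P E)"
        using m0 unfolding F1' .
      have "1 + real (card F1) * (- x) \<le> (1 + (- x)) ^ card F1"
        by (rule Bernoulli_inequality) (use x1 in simp)
      moreover have "real (card F1) * x \<le> real D * x" using F1D x0 by (simp add: mult_right_mono)
      ultimately have b: "1 - 1 / t \<le> (1 - x) ^ card F1" using xD by simp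
      have "pr (A \<inter> CC P E) * (1 - 1 / t) \<le> pr (A \<inter> CC P E) * (1 - x) ^ card F1"
        using b pr_nonneg by (simp add: mult_left_mono)
      then have m2: "pr (A \<inter> CC P E) * (1 - 1 / t) \<le> 1 / real q * pr (CC P E)"
        using m1 prA by simp
      define r where "r = marginal V E P q v c"
      have r0: "0 \<le> r" unfolding r_def marg using pr_nonneg CCpos by simp
      have r1: "r * (1 - 1 / t) \<le> 1 / real q"
        using m2 CCpos unfolding r_def marg by (simp add: field_simps)
      have g: "1 \<le> (1 - 1 / t) * (1 + 4 / t)" using t2 by (simp add: field_simps)
      have "r \<le> r * ((1 - 1 / t) * (1 + 4 / t))" using mult_left_mono[OF g r0] by simp
      also have "\<dots> = (r * (1 - 1 / t)) * (1 + 4 / t)" by simp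
      also have "\<dots> \<le> 1 / real q * (1 + 4 / t)" by (rule mult_right_mono[OF r1]) (use t2 in simp)
      finally show ?thesis unfolding r_def .
    qed
    have lower: "1 / real q * (1 - 1 / t) \<le> marginal V E P q v c"
    proof -
      define F2 where "F2 = {f\<in>E. v \<notin> f}"
      define C' where "C' = CC P F2"
      have F2E: "F2 \<subseteq> E" unfolding F2_def by blast
      have C'O: "C' \<subseteq> Om" unfolding C'_def by (rule CC_sub)
      have cover: "A \<inter> C' \<subseteq> (A \<inter> CC P E) \<union> (\<Union>e\<in>F1. (A \<inter> Bad P e) \<inter> C')"
        unfolding C'_def CC_def F1_def F2_def by blast
      have "pr (A \<inter> C') \<le> pr ((A \<inter> CC P E) \<union> (\<Union>e\<in>F1. (A \<inter> Bad P e) \<inter> C'))"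
        by (rule pr_mono[OF cover]) (use CC_sub C'O in blast)
      also have "\<dots> \<le> pr (A \<inter> CC P E) + pr (\<Union>e\<in>F1. (A \<inter> Bad P e) \<inter> C')" by (rule pr_Un)
      also have "\<dots> \<le> pr (A \<inter> CC P E) + (\<Sum>e\<in>F1. pr ((A \<inter> Bad P e) \<inter> C'))"
        by (rule add_left_mono[OF pr_UN[OF finF1]])
      finally have s1: "pr (A \<inter> C') \<le> pr (A \<inter> CC P E) + (\<Sum>e\<in>F1. pr ((A \<inter> Bad P e) \<inter> C'))" .
      have disj: "{v} \<inter> \<Union>F2 = {}" unfolding F2_def by blast
      have ind: "pr (A \<inter> C') = pr A * pr C'" unfolding C'_def by (rule indep[OF depA dep_CC disj])
      have each: "pr ((A \<inter> Bad P e) \<inter> C') \<le> pr C' / (real q * t * real D)" if eF1: "e \<in> F1" for e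
      proof -
        have eE: "e \<in> E" and ve: "v \<in> e" using eF1 unfolding F1_def by auto
        have eV: "e \<subseteq> V" using EV eE by blast
        have de: "dep e (A \<inter> Bad P e)"
          by (rule dep_Int[OF dep_mono[OF depA] dep_Bad]) (use ve in blast)
        have m: "pr ((A \<inter> Bad P e) \<inter> C') * (1 - x) ^ card {f\<in>F2. f \<inter> e \<noteq> {}} \<le> pr (A \<inter> Bad P e) * pr C'"
          using main[OF F2E] de unfolding C'_def by blast
        have sub: "{f\<in>F2. f \<inter> e \<noteq> {}} \<subseteq> {f\<in>E. f \<noteq> e \<and> f \<inter> e \<noteq> {}}"
          unfolding F2_def using ve by blast
        have "card {f\<in>F2. f \<inter> e \<noteq> {}} \<le> card {f\<in>E. f \<noteq> e \<and> f \<inter> e \<noteq> {}}"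
          using finE by (intro card_mono[OF _ sub]) auto
        then have "real (card {f\<in>F2. f \<inter> e \<noteq> {}}) \<le> t * real D - 1" using nbb[OF eE] by linarith
        then have pe: "exp (-1) \<le> (1 - x) ^ card {f\<in>F2. f \<inter> e \<noteq> {}}" by (rule powlb)
        have pAB: "pr (A \<inter> Bad P e) \<le> 1 / real q ^ card e"
        proof -
          have "pr (A \<inter> Bad P e) \<le> pr {s\<in>Om. \<forall>u\<in>e. s u = c}"
            by (rule pr_mono) (use ABad[of v e P c] ve eV PE eE in \<open>auto simp: A_def\<close>)
          also have "\<dots> = 1 / real q ^ card e" by (rule cnt[OF eV cq])
          finally show ?thesis .
        qed
        have "1 / real q ^ card e \<le> 1 / (real q * (exp 1 * t * real D))"
          unfolding qe2[OF eE] using qe[OF eE] epos qpos by (simp add: frac_le mult_left_mono)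
        with pAB have pAB2: "pr (A \<inter> Bad P e) \<le> 1 / (real q * (exp 1 * t * real D))" by linarith
        have "pr ((A \<inter> Bad P e) \<inter> C') * exp (-1) \<le> pr ((A \<inter> Bad P e) \<inter> C') * (1 - x) ^ card {f\<in>F2. f \<inter> e \<noteq> {}}"
          using pe pr_nonneg by (simp add: mult_left_mono)
        also have "\<dots> \<le> pr (A \<inter> Bad P e) * pr C'" by (rule m)
        also have "\<dots> \<le> 1 / (real q * (exp 1 * t * real D)) * pr C'"
          by (rule mult_right_mono[OF pAB2 pr_nonneg])
        finally have "pr ((A \<inter> Bad P e) \<inter> C') * exp (-1) \<le> 1 / (real q * (exp 1 * t * real D)) * pr C'" .
        then have "exp 1 * (pr ((A \<inter> Bad P e) \<inter> C') * exp (-1)) \<le> exp 1 * (1 / (real q * (exp 1 * t * real D)) * pr C')"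
          by (rule mult_left_mono) simp
        moreover have "exp 1 * (pr ((A \<inter> Bad P e) \<inter> C') * exp (-1)) = pr ((A \<inter> Bad P e) \<inter> C')"
          by (simp add: exp_minus)
        moreover have "exp 1 * (1 / (real q * (exp 1 * t * real D)) * pr C') = pr C' / (real q * t * real D)"
          by (simp add: field_simps)
        ultimately show ?thesis by simp
      qed
      have "(\<Sum>e\<in>F1. pr ((A \<inter> Bad P e) \<inter> C')) \<le> (\<Sum>e\<in>F1. pr C' / (real q * t * real D))"
        by (rule sum_mono) (rule each)
      also have "\<dots> = real (card F1) * (pr C' / (real q * t * real D))" by simp
      also have "\<dots> \<le> real D * (pr C' / (real q * t * real D))"
        using F1D pr_nonneg qpos t2 by (intro mult_right_mono) simp_all
      also have "\<dots> = pr C' / (real q * t)" using Dr by (simp add: field_simps)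
      finally have s2: "(\<Sum>e\<in>F1. pr ((A \<inter> Bad P e) \<inter> C')) \<le> pr C' / (real q * t)" .
      have low: "1 / real q * (1 - 1 / t) * pr C' \<le> pr (A \<inter> CC P E)"
      proof -
        have "1 / real q * (1 - 1 / t) * pr C' = pr A * pr C' - pr C' / (real q * t)"
          using prA qpos t2 by (simp add: field_simps)
        also have "\<dots> \<le> pr (A \<inter> CC P E)" using s1 s2 ind by linarith
        finally show ?thesis .
      qed
      have CC_le: "pr (CC P E) \<le> pr C'"
        unfolding C'_def by (rule pr_mono[OF CC_anti[OF F2E] CC_sub])
      have nn: "0 \<le> 1 / real q * (1 - 1 / t)" using t2 qpos by simp
      have "1 / real q * (1 - 1 / t) * pr (CC P E) \<le> 1 / real q * (1 - 1 / t) * pr C'"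
        using CC_le nn by (rule mult_left_mono)
      also have "\<dots> \<le> pr (A \<inter> CC P E)" by (rule low)
      finally have "1 / real q * (1 - 1 / t) * pr (CC P E) \<le> pr (A \<inter> CC P E)" .
      then show ?thesis unfolding marg using CCpos by (simp add: pos_le_divide_eq)
    qed
    show ?thesis using upper lower by blast
  qed
qed

end
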